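(* Let $n\ge 1$ and let $P\in\mathbb{R}^{n\times n}$ satisfy $\|P\|<1$. Let $w\in\mathbb{R}^n$ be a global maximizer of $$L(w)=\langle w,Pw\rangle-\sum_{i=1}^n\log\Big(\sum_{j=1}^n\exp(w_iw_j)\Big)$$ over $\mathbb{R}^n$. Then $$\|w\|^2\le\frac{n\log n}{1-\|P\|}.$$
   Context: $\|w\|$ denotes the Euclidean norm of $w$, $\langle\cdot,\cdot\rangle$ the standard inner product, and $\|P\|$ the operator norm of $P$ induced by the Euclidean norm. *)

theory Defs
  imports "HOL-Analysis.Analysis"
begin

definition objL :: "real^'n^'n \<Rightarrow> real^'n \<Rightarrow> real" where
  "objL P w = inner w (P *v w) - (\<Sum>i\<in>UNIV. ln (\<Sum>j\<in>UNIV. exp (w $ i * w $ j)))"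

end

theory Submission
  imports Defs
begin

theorem theorem3p2:
  fixes P :: "real^'n^'n" and w :: "real^'n"
  assumes "onorm (\<lambda>x. P *v x) < 1"
    and "\<forall>v :: real^'n. objL P v \<le> objL P w"
  shows "(norm w)\<^sup>2 \<le> real CARD('n) * ln (real CARD('n)) / (1 - onorm (\<lambda>x. P *v x))"
proof -
  let ?o = "onorm (\<lambda>x. P *v x)"
  let ?n = "real CARD('n)"
  have z: "objL P 0 = - (?n * ln ?n)"
    by (simp add: objL_def)
  have bl: "bounded_linear (\<lambda>x. P *v x)"
    by (simp add: matrix_vector_mul_bounded_linear)
  have "inner w (P *v w) \<le> norm w * norm (P *v w)"
    by (rule norm_cauchy_schwarz)
  also have "\<dots> \<le> norm w * (?o * norm w)"
    by (rule mult_left_mono[OF onorm[OF bl]]) simp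
  finally have i1: "inner w (P *v w) \<le> ?o * (norm w)\<^sup>2"
    by (simp add: power2_eq_square algebra_simps)
  have l: "(w $ i)\<^sup>2 \<le> ln (\<Sum>j\<in>UNIV. exp (w $ i * w $ j))" for i
  proof -
    have "exp (w $ i * w $ i) \<le> (\<Sum>j\<in>UNIV. exp (w $ i * w $ j))"
      by (rule member_le_sum) auto
    hence "ln (exp (w $ i * w $ i)) \<le> ln (\<Sum>j\<in>UNIV. exp (w $ i * w $ j))"
      by (subst ln_le_cancel_iff) (auto intro: sum_pos)
    thus ?thesis by (simp add: power2_eq_square)
  qed
  have "(norm w)\<^sup>2 = (\<Sum>i\<in>UNIV. (w $ i)\<^sup>2)"
    by (simp add: norm_vec_def L2_set_def sum_nonneg)
  also have "\<dots> \<le> (\<Sum>i\<in>UNIV. ln (\<Sum>j\<in>UNIV. exp (w $ i * w $ j)))"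
    by (rule sum_mono) (rule l)
  finally have s: "(norm w)\<^sup>2 \<le> (\<Sum>i\<in>UNIV. ln (\<Sum>j\<in>UNIV. exp (w $ i * w $ j)))" .
  have "objL P 0 \<le> objL P w" using assms(2) by blast
  hence "- (?n * ln ?n) \<le> ?o * (norm w)\<^sup>2 - (norm w)\<^sup>2"
    using z i1 s by (simp add: objL_def)
  hence "(1 - ?o) * (norm w)\<^sup>2 \<le> ?n * ln ?n" by (simp add: algebra_simps)
  thus ?thesis using assms(1) by (simp add: pos_le_divide_eq mult.commute)
qed

end
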